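(* Let $n\ge3$ and $1<\alpha\le\sqrt2$. Then the set of minimal vectors of $D_n^\alpha$ is $S(D_n^\alpha)=\{\pm\mathbf{b}_1,\dots,\pm\mathbf{b}_n\}$. In particular $\lambda_1^2(D_n^\alpha)=2$ and $D_n^\alpha$ is generic well-rounded.
   Context: Let $\mathbf{e}_1,\dots,\mathbf{e}_n$ be the standard basis of $\mathbb{R}^n$. For $n\ge3$, $1\le\alpha\le\sqrt2$ and $\overline\alpha:=\sqrt{2-\alpha^2}$, $D_n^\alpha$ is the lattice with basis $\mathbf{b}_1=\alpha\mathbf{e}_1+\overline\alpha\mathbf{e}_2$, $\mathbf{b}_2=\alpha\mathbf{e}_2+\overline\alpha\mathbf{e}_3$, $\mathbf{b}_3=\overline\alpha\mathbf{e}_1+\alpha\mathbf{e}_3$, $\mathbf{b}_4=\overline\alpha\mathbf{e}_3-\alpha\mathbf{e}_4$, and $\mathbf{b}_k=\overline\alpha\mathbf{e}_{k-1}-\alpha\mathbf{e}_k$ for $5\le k\le n$. $S(\Lambda)$ is the set of vectors of $\Lambda$ of norm $\lambda_1(\Lambda)=\min_{0\ne\mathbf{x}\in\Lambda}\|\mathbf{x}\|$. A lattice in $\mathbb{R}^n$ is generic well-rounded if $S(\Lambda)$ spans $\mathbb{R}^n$ and $|S(\Lambda)|=2n$. *)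

theory Defs
  imports Complex_Main
begin

text \<open>Vectors of R^n are represented as functions nat => real supported on {1..n};
  coordinate j is the j-th standard coordinate (1-based, as in the paper).\<close>

definition in_Rn :: "nat \<Rightarrow> (nat \<Rightarrow> real) \<Rightarrow> bool" where
  "in_Rn n x \<longleftrightarrow> (\<forall>j. j \<notin> {1..n} \<longrightarrow> x j = 0)"

definition vnorm :: "nat \<Rightarrow> (nat \<Rightarrow> real) \<Rightarrow> real" where
  "vnorm n x = sqrt (\<Sum>j=1..n. (x j)^2)"

definition stdb :: "nat \<Rightarrow> (nat \<Rightarrow> real)" where
  "stdb i = (\<lambda>j. if j = i then 1 else 0)"

definition abar :: "real \<Rightarrow> real" where
  "abar \<alpha> = sqrt (2 - \<alpha>^2)"

definition Db :: "real \<Rightarrow> nat \<Rightarrow> (nat \<Rightarrow> real)" where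
  "Db \<alpha> k = (\<lambda>j.
     if k = 1 then \<alpha> * stdb 1 j + abar \<alpha> * stdb 2 j
     else if k = 2 then \<alpha> * stdb 2 j + abar \<alpha> * stdb 3 j
     else if k = 3 then abar \<alpha> * stdb 1 j + \<alpha> * stdb 3 j
     else if k = 4 then abar \<alpha> * stdb 3 j - \<alpha> * stdb 4 j
     else abar \<alpha> * stdb (k - 1) j - \<alpha> * stdb k j)"

definition lattice_gen :: "nat \<Rightarrow> (nat \<Rightarrow> nat \<Rightarrow> real) \<Rightarrow> (nat \<Rightarrow> real) set" where
  "lattice_gen n v = {x. \<exists>c :: nat \<Rightarrow> int. x = (\<lambda>j. \<Sum>k=1..n. of_int (c k) * v k j)}"

definition D_lattice :: "nat \<Rightarrow> real \<Rightarrow> (nat \<Rightarrow> real) set" where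
  "D_lattice n \<alpha> = lattice_gen n (Db \<alpha>)"

definition lambda1 :: "nat \<Rightarrow> (nat \<Rightarrow> real) set \<Rightarrow> real" where
  "lambda1 n L = Inf {vnorm n x | x. x \<in> L \<and> x \<noteq> (\<lambda>_. 0)}"

definition minvecs :: "nat \<Rightarrow> (nat \<Rightarrow> real) set \<Rightarrow> (nat \<Rightarrow> real) set" where
  "minvecs n L = {x \<in> L. x \<noteq> (\<lambda>_. 0) \<and> vnorm n x = lambda1 n L}"

definition spans_Rn :: "nat \<Rightarrow> (nat \<Rightarrow> real) set \<Rightarrow> bool" where
  "spans_Rn n S \<longleftrightarrow> (\<forall>x. in_Rn n x \<longrightarrow>
     (\<exists>F c. finite F \<and> F \<subseteq> S \<and> x = (\<lambda>j. \<Sum>v\<in>F. c v * v j)))"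

definition generic_WR :: "nat \<Rightarrow> (nat \<Rightarrow> real) set \<Rightarrow> bool" where
  "generic_WR n L \<longleftrightarrow> spans_Rn n (minvecs n L) \<and> card (minvecs n L) = 2 * n"

end

theory Submission
  imports Defs
begin


lemma tele_gen:
  fixes g :: "nat \<Rightarrow> 'a::ab_group_add"
  assumes "m \<le> n + 1"
  shows "(\<Sum>j=m..n. g (j+1)) = (\<Sum>j=m..n. g j) - g m + g (n+1)"
  using assms
proof (induction n)
  case 0
  then show ?case by (cases m) auto
next
  case (Suc n)
  show ?case
  proof (cases "m = Suc n + 1")
    case True then show ?thesis by simp
  next
    case False
    then have "m \<le> n + 1" using Suc.prems by simp
    then have "m \<le> Suc n" by simp
    then show ?thesis using Suc.IH[OF \<open>m \<le> n+1\<close>] by (simp add: sum.cl_ivl_Suc algebra_simps)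
  qed
qed

lemma sum_delta_two:
  fixes c :: "nat \<Rightarrow> real"
  assumes "finite S"
  shows "(\<Sum>k\<in>S. c k * ((if k = p then u else 0) + (if k = q then v else 0)))
     = (if p \<in> S then c p * u else 0) + (if q \<in> S then c q * v else 0)"
  using assms by (simp add: distrib_left sum.distrib if_distrib[of "\<lambda>x. c _ * x"] sum.delta cong: if_cong)

lemma ab_facts:
  assumes "1 < \<alpha>" "\<alpha> \<le> sqrt 2"
  shows "abar \<alpha> \<ge> 0" "\<alpha>^2 + (abar \<alpha>)^2 = 2" "abar \<alpha> < 1" "\<alpha> * abar \<alpha> < 1"
    "(abar \<alpha>)^2 \<le> \<alpha> * abar \<alpha>"
proof -
  have a2: "\<alpha>^2 \<le> 2" using assms
  proof -
    have "\<alpha>^2 \<le> (sqrt 2)^2" using assms by (intro power_mono) auto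
    then show ?thesis by simp
  qed
  show "abar \<alpha> \<ge> 0" unfolding abar_def using a2 by simp
  show e: "\<alpha>^2 + (abar \<alpha>)^2 = 2" unfolding abar_def using a2 by simp
  have "\<alpha>^2 > 1" using assms by (simp add: one_less_power)
  then have b2: "(abar \<alpha>)^2 < 1" using e by simp
  show b1: "abar \<alpha> < 1" using b2 \<open>abar \<alpha> \<ge> 0\<close>
    by (metis abs_of_nonneg abs_square_less_1)
  have "(\<alpha> - abar \<alpha>)^2 > 0" using b1 assms by simp
  then show "\<alpha> * abar \<alpha> < 1" using e by (simp add: power2_eq_square algebra_simps)
  show "(abar \<alpha>)^2 \<le> \<alpha> * abar \<alpha>" using b1 assms \<open>abar \<alpha> \<ge> 0\<close>
    by (simp add: power2_eq_square mult_right_mono)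
qed


lemma Db1: "Db \<alpha> (Suc 0) j = \<alpha> * stdb 1 j + abar \<alpha> * stdb 2 j" by (simp add: Db_def)
lemma Db2: "Db \<alpha> 2 j = \<alpha> * stdb 2 j + abar \<alpha> * stdb 3 j" by (simp add: Db_def)
lemma Db3: "Db \<alpha> 3 j = abar \<alpha> * stdb 1 j + \<alpha> * stdb 3 j" by (simp add: Db_def)
lemma Db4: "Db \<alpha> 4 j = abar \<alpha> * stdb 3 j - \<alpha> * stdb 4 j" by (simp add: Db_def)
lemma Db5: "k \<ge> 5 \<Longrightarrow> Db \<alpha> k j = abar \<alpha> * stdb (k-1) j - \<alpha> * stdb k j" by (simp add: Db_def)
lemma Db0: "Db \<alpha> 0 j = abar \<alpha> * stdb 0 j - \<alpha> * stdb 0 j" by (simp add: Db_def)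

lemma k_cases: obtains "k = 0" | "k = Suc 0" | "k = 2" | "k = 3" | "k = 4" | "k \<ge> (5::nat)" by linarith

lemmas Dbs = Db0 Db1 Db2 Db3 Db4 Db5 stdb_def

lemma Db_col1: "Db \<alpha> k 1 = (if k = 1 then \<alpha> else 0) + (if k = 3 then abar \<alpha> else 0)"
  by (cases k rule: k_cases) (auto simp add: Dbs)
lemma Db_col2: "Db \<alpha> k 2 = (if k = 1 then abar \<alpha> else 0) + (if k = 2 then \<alpha> else 0)"
  by (cases k rule: k_cases) (auto simp add: Dbs)
lemma Db_col3: "Db \<alpha> k 3 = (if k = 2 then abar \<alpha> else 0) + ((if k = 3 then \<alpha> else 0) + (if k = 4 then abar \<alpha> else 0))"
  by (cases k rule: k_cases) (auto simp add: Dbs)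
lemma Db_col4: "j \<ge> 4 \<Longrightarrow> Db \<alpha> k j = (if k = j then - \<alpha> else 0) + (if k = j + 1 then abar \<alpha> else 0)"
  by (cases k rule: k_cases) (auto simp add: Dbs)


lemma sum_delta_three:
  fixes c :: "nat \<Rightarrow> real"
  assumes "finite S"
  shows "(\<Sum>k\<in>S. c k * ((if k = p then u else 0) + ((if k = q then v else 0) + (if k = r then w else 0))))
     = (if p \<in> S then c p * u else 0) + (if q \<in> S then c q * v else 0) + (if r \<in> S then c r * w else 0)"
  using assms by (simp add: distrib_left sum.distrib if_distrib[of "\<lambda>x. c _ * x"] sum.delta cong: if_cong)

definition lv :: "nat \<Rightarrow> real \<Rightarrow> (nat \<Rightarrow> real) \<Rightarrow> nat \<Rightarrow> real" where
  "lv n \<alpha> r = (\<lambda>j. \<Sum>k=1..n. r k * Db \<alpha> k j)"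

lemma lv1: "n \<ge> 3 \<Longrightarrow> lv n \<alpha> r 1 = \<alpha> * r 1 + abar \<alpha> * r 3"
  unfolding lv_def Db_col1 by (subst sum_delta_two) (auto simp: mult.commute)
lemma lv2: "n \<ge> 3 \<Longrightarrow> lv n \<alpha> r 2 = abar \<alpha> * r 1 + \<alpha> * r 2"
  unfolding lv_def Db_col2 by (subst sum_delta_two) (auto simp: mult.commute)
lemma lv3: "n \<ge> 3 \<Longrightarrow> lv n \<alpha> r 3 = abar \<alpha> * r 2 + \<alpha> * r 3 + abar \<alpha> * (if 4 \<le> n then r 4 else 0)"
  unfolding lv_def Db_col3 by (subst sum_delta_three) (auto simp: mult.commute)
lemma lv4: "j \<ge> 4 \<Longrightarrow> lv n \<alpha> r j = - \<alpha> * (if j \<le> n then r j else 0) + abar \<alpha> * (if j + 1 \<le> n then r (j+1) else 0)"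
  unfolding lv_def Db_col4[of j] by (subst sum_delta_two) (auto simp: mult.commute)
lemma lv0: "lv n \<alpha> r 0 = 0"
  unfolding lv_def by (rule sum.neutral) (auto simp: Db_def stdb_def)


lemma split123:
  fixes f :: "nat \<Rightarrow> 'a::comm_monoid_add"
  assumes "n \<ge> 3"
  shows "(\<Sum>j=1..n. f j) = f 1 + f 2 + f 3 + (\<Sum>j=4..n. f j)"
proof -
  have "{1..n} = {1,2,3} \<union> {4..n}" using assms by auto
  then have "(\<Sum>j=1..n. f j) = (\<Sum>j\<in>{1,2,3}. f j) + (\<Sum>j=4..n. f j)"
    by (simp add: sum.union_disjoint add.assoc)
  then show ?thesis by (simp add: ac_simps)
qed

definition dd :: "nat \<Rightarrow> (nat \<Rightarrow> 'a::zero) \<Rightarrow> nat \<Rightarrow> 'a" where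
  "dd n r k = (if k \<le> n then r k else 0)"

definition WW :: "nat \<Rightarrow> (nat \<Rightarrow> 'a::comm_ring_1) \<Rightarrow> 'a" where
  "WW n r = (\<Sum>j=4..n. (dd n r j - dd n r (j+1))^2)"
definition Q10 :: "nat \<Rightarrow> (nat \<Rightarrow> 'a::comm_ring_1) \<Rightarrow> 'a" where
  "Q10 n r = (r 1 + r 2 + r 3)^2 + (r 1)^2 + (r 2)^2 + (r 3 + dd n r 4)^2 + WW n r"
definition Q11 :: "nat \<Rightarrow> (nat \<Rightarrow> 'a::comm_ring_1) \<Rightarrow> 'a" where
  "Q11 n r = (r 1 + r 3)^2 + (r 1 + r 2)^2 + (r 2 + r 3 + dd n r 4)^2 + WW n r"

lemma norm_decomp:
  fixes a b :: real
  assumes n: "n \<ge> 3" and ab: "a^2 + b^2 = 2" and bdef: "b = abar a"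
  shows "(\<Sum>j=1..n. (lv n a r j)^2) = 2*(1 - a*b) * (\<Sum>k=1..n. (r k)^2) + (a*b - b^2) * Q10 n r + b^2 * Q11 n r"
proof -
  define d where "d = dd n r"
  have d123: "d 1 = r 1" "d 2 = r 2" "d 3 = r 3" using n by (auto simp: d_def dd_def)
  have dn: "d (n+1) = 0" by (simp add: d_def dd_def)
  define S where "S = (\<Sum>j=4..n. (d j)^2)"
  define T where "T = (\<Sum>j=4..n. (d (j+1))^2)"
  define W where "W = WW n r"
  have TS: "T = S - (d 4)^2"
    unfolding T_def S_def using tele_gen[of 4 n "\<lambda>j. (d j)^2"] n dn by simp
  have W': "W = (\<Sum>j=4..n. (d j - d (j+1))^2)" by (simp add: W_def WW_def d_def)
  have path: "(\<Sum>j=4..n. (lv n a r j)^2) = a*b*W + (a^2 - a*b) * S + (b^2 - a*b) * T"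
  proof -
    have "(\<Sum>j=4..n. (lv n a r j)^2) = (\<Sum>j=4..n. a*b*(d j - d (j+1))^2 + (a^2 - a*b)*(d j)^2 + (b^2 - a*b)*(d (j+1))^2)"
    proof (rule sum.cong)
      fix j assume j: "j \<in> {4..n}"
      then have e: "lv n a r j = - a * d j + b * d (j+1)"
        using lv4[of j n a r] bdef by (simp add: d_def dd_def)
      then show "(lv n a r j)^2 = a*b*(d j - d (j+1))^2 + (a^2 - a*b)*(d j)^2 + (b^2 - a*b)*(d (j+1))^2"
        unfolding e by (simp add: power2_eq_square algebra_simps)
    qed simp
    also have "\<dots> = a*b*W + (a^2 - a*b) * S + (b^2 - a*b) * T"
      by (simp add: W' S_def T_def sum.distrib sum_distrib_left)
    finally show ?thesis .
  qed
  have N: "(\<Sum>k=1..n. (r k)^2) = (r 1)^2 + (r 2)^2 + (r 3)^2 + S"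
  proof -
    have "(\<Sum>k=1..n. (r k)^2) = (\<Sum>k=1..n. (d k)^2)" by (rule sum.cong) (auto simp: d_def dd_def)
    then show ?thesis using split123[OF n, of "\<lambda>k. (d k)^2"] d123 by (simp add: S_def)
  qed
  have h1: "lv n a r 1 = a * r 1 + b * r 3" using lv1[OF n] bdef by simp
  have h2: "lv n a r 2 = b * r 1 + a * r 2" using lv2[OF n] bdef by simp
  have h3: "lv n a r 3 = b * r 2 + a * r 3 + b * d 4" using lv3[OF n] bdef n by (simp add: d_def dd_def)
  have Q10e: "Q10 n r = (r 1 + r 2 + r 3)^2 + (r 1)^2 + (r 2)^2 + (r 3 + d 4)^2 + W"
    by (simp add: Q10_def W_def d_def)
  have Q11e: "Q11 n r = (r 1 + r 3)^2 + (r 1 + r 2)^2 + (r 2 + r 3 + d 4)^2 + W"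
    by (simp add: Q11_def W_def d_def)
  have a2: "a^2 = 2 - b^2" using ab by simp
  have "(\<Sum>j=1..n. (lv n a r j)^2) - (2*(1 - a*b) * (\<Sum>k=1..n. (r k)^2) + (a*b - b^2) * Q10 n r + b^2 * Q11 n r)
     = (a^2+b^2-2) * ((r 1)^2+(r 2)^2+(r 3)^2+S)"
    unfolding split123[OF n, of "\<lambda>j. (lv n a r j)^2"] path N Q10e Q11e h1 h2 h3 TS
    by (simp add: power2_eq_square algebra_simps)
  then show ?thesis using ab by simp
qed


lemma sq_ge1: "(u::int) \<noteq> 0 \<Longrightarrow> 1 \<le> u^2"
proof -
  assume "u \<noteq> 0"
  then have "1 \<le> \<bar>u\<bar>" by simp
  then have "1 \<le> \<bar>u\<bar>^2" by (rule one_le_power)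
  then show ?thesis by simp
qed

lemma ev_sq: "even ((x::int)^2 - x)"
proof -
  have "x^2 - x = x * (x - 1)" by (simp add: power2_eq_square algebra_simps)
  moreover have "even (x * (x - 1))" by (cases "even x") auto
  ultimately show ?thesis by simp
qed

lemma tele_diff:
  fixes g :: "nat \<Rightarrow> 'a::ab_group_add"
  assumes "m \<le> n + 1"
  shows "(\<Sum>j=m..n. g j - g (j+1)) = g m - g (n+1)"
  using tele_gen[OF assms, of g] by (simp add: sum_subtractf)

lemma W_par: "even (WW n (c::nat\<Rightarrow>int) - dd n c 4)" if "n \<ge> 3"
proof -
  have "WW n c - dd n c 4 = (\<Sum>j=4..n. (dd n c j - dd n c (j+1))^2 - (dd n c j - dd n c (j+1)))"
    using tele_diff[of 4 n "dd n c"] that by (simp add: WW_def sum_subtractf dd_def)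
  also have "even \<dots>" by (rule dvd_sum) (rule ev_sq)
  finally show ?thesis .
qed

lemma Q10_even: "n \<ge> 3 \<Longrightarrow> even (Q10 n (c::nat\<Rightarrow>int))"
proof -
  assume n: "n \<ge> 3"
  define d4 where "d4 = dd n c 4"
  have "Q10 n c = ((c 1 + c 2 + c 3)^2 - (c 1 + c 2 + c 3)) + ((c 1)^2 - c 1) + ((c 2)^2 - c 2)
     + ((c 3 + d4)^2 - (c 3 + d4)) + (WW n c - d4) + 2 * (c 1 + c 2 + c 3 + d4)"
    by (simp add: Q10_def d4_def algebra_simps)
  moreover have "even (WW n c - d4)" using W_par[OF n, of c] by (simp add: d4_def)
  ultimately show ?thesis by (simp only:) (intro dvd_add ev_sq; simp)
qed

lemma Q11_even: "n \<ge> 3 \<Longrightarrow> even (Q11 n (c::nat\<Rightarrow>int))"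
proof -
  assume n: "n \<ge> 3"
  define d4 where "d4 = dd n c 4"
  have "Q11 n c = ((c 1 + c 3)^2 - (c 1 + c 3)) + ((c 1 + c 2)^2 - (c 1 + c 2))
     + ((c 2 + c 3 + d4)^2 - (c 2 + c 3 + d4)) + (WW n c - d4) + 2 * (c 1 + c 2 + c 3 + d4)"
    by (simp add: Q11_def d4_def algebra_simps)
  moreover have "even (WW n c - d4)" using W_par[OF n, of c] by (simp add: d4_def)
  ultimately show ?thesis by (simp only:) (intro dvd_add ev_sq; simp)
qed

lemma W_nonneg: "0 \<le> WW n (c::nat \<Rightarrow> int)"
  unfolding WW_def by (rule sum_nonneg) simp

lemma W_pos: assumes "k \<in> {4..n}" "c k \<noteq> (0::int)" shows "1 \<le> WW n c"
proof -
  have "(\<Sum>j=k..n. dd n c j - dd n c (j+1)) = dd n c k"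
    using tele_diff[of k n "dd n c"] assms by (simp add: dd_def)
  also have "\<dots> \<noteq> 0" using assms by (simp add: dd_def)
  finally obtain j where j: "j \<in> {k..n}" "dd n c j - dd n c (j+1) \<noteq> 0"
    by (meson sum.neutral)
  have "1 \<le> (dd n c j - dd n c (j+1))^2" using j sq_ge1 by blast
  also have "\<dots> \<le> WW n c" unfolding WW_def
    by (rule member_le_sum) (use j assms in auto)
  finally show ?thesis .
qed

lemma Q_pos:
  assumes n: "n \<ge> 3" and k: "k \<in> {1..n}" "c k \<noteq> (0::int)"
  shows "1 \<le> Q10 n c \<and> 1 \<le> Q11 n c"
proof (cases "\<exists>k\<in>{4..n}. c k \<noteq> 0")
  case True
  then obtain k' where "k' \<in> {4..n}" "c k' \<noteq> 0" by blast
  then have "1 \<le> WW n c" by (rule W_pos)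
  then show ?thesis unfolding Q10_def Q11_def
    by (smt (verit) zero_le_power2)
next
  case False
  then have d4: "dd n c 4 = 0" by (auto simp: dd_def)
  have "k \<in> {1,2,3}" using False k by auto
  then have nz: "c 1 \<noteq> 0 \<or> c 2 \<noteq> 0 \<or> c 3 \<noteq> 0" using k by auto
  have W0: "0 \<le> WW n c" by (rule W_nonneg)
  have a: "1 \<le> (c 1)^2 + (c 2)^2 + (c 3)^2"
    using nz sq_ge1 by (smt (verit) zero_le_power2)
  have b: "1 \<le> (c 1 + c 3)^2 + (c 1 + c 2)^2 + (c 2 + c 3)^2"
  proof (cases "c 1 + c 3 = 0 \<and> c 1 + c 2 = 0 \<and> c 2 + c 3 = 0")
    case True then show ?thesis using nz by auto
  next
    case False then show ?thesis using sq_ge1 by (smt (verit) zero_le_power2)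
  qed
  have p1: "0 \<le> (c 1 + c 2 + c 3)^2" by simp
  have q10: "Q10 n c = (c 1 + c 2 + c 3)^2 + ((c 1)^2 + (c 2)^2 + (c 3)^2) + WW n c"
    unfolding Q10_def d4 by simp
  have q11: "Q11 n c = ((c 1 + c 3)^2 + (c 1 + c 2)^2 + (c 2 + c 3)^2) + WW n c"
    unfolding Q11_def d4 by simp
  show ?thesis unfolding q10 q11 using a b W0 p1 by linarith
qed

lemma Q_ge2:
  assumes n: "n \<ge> 3" and k: "k \<in> {1..n}" "c k \<noteq> (0::int)"
  shows "2 \<le> Q10 n c \<and> 2 \<le> Q11 n c"
proof -
  have e: "2 \<le> x" if "even (x::int)" "1 \<le> x" for x using that by (auto elim!: evenE)
  show ?thesis using Q_pos[of n k c] assms Q10_even[OF n, of c] Q11_even[OF n, of c] e by blast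
qed


lemma dd_of_int: "dd n (\<lambda>k. real_of_int (c k)) j = real_of_int (dd n c j)"
  by (simp add: dd_def)

lemma Q10_of_int: "Q10 n (\<lambda>k. real_of_int (c k)) = real_of_int (Q10 n c)"
  by (simp add: Q10_def WW_def dd_of_int)
lemma Q11_of_int: "Q11 n (\<lambda>k. real_of_int (c k)) = real_of_int (Q11 n c)"
  by (simp add: Q11_def WW_def dd_of_int)

lemma vnorm_sq: "(vnorm n x)^2 = (\<Sum>j=1..n. (x j)^2)"
  unfolding vnorm_def by (simp add: sum_nonneg)

lemma key_bound:
  assumes n: "n \<ge> 3" and al: "1 < \<alpha>" "\<alpha> \<le> sqrt 2"
    and k: "k \<in> {1..n}" "c k \<noteq> (0::int)"
  shows "(\<Sum>j=1..n. (lv n \<alpha> (\<lambda>k. real_of_int (c k)) j)^2)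
          \<ge> 2 + 2 * (1 - \<alpha> * abar \<alpha>) * (real_of_int (\<Sum>k=1..n. (c k)^2) - 1)"
proof -
  define a where "a = \<alpha>"
  define b where "b = abar \<alpha>"
  have ab: "a^2 + b^2 = 2" "b \<ge> 0" "a*b < 1" "b^2 \<le> a*b"
    using ab_facts[OF al] by (auto simp: a_def b_def)
  have dec: "(\<Sum>j=1..n. (lv n a (\<lambda>k. real_of_int (c k)) j)^2) =
      2*(1 - a*b) * (\<Sum>k=1..n. (real_of_int (c k))^2) + (a*b - b^2) * real_of_int (Q10 n c)
        + b^2 * real_of_int (Q11 n c)"
    using norm_decomp[OF n ab(1), of "\<lambda>k. real_of_int (c k)"] b_def a_def
    by (simp add: Q10_of_int Q11_of_int)
  have q: "2 \<le> real_of_int (Q10 n c)" "2 \<le> real_of_int (Q11 n c)"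
    using Q_ge2[of n k c] n k by auto
  have "(a*b - b^2) * 2 \<le> (a*b - b^2) * real_of_int (Q10 n c)"
    using q ab by (intro mult_left_mono) auto
  moreover have "b^2 * 2 \<le> b^2 * real_of_int (Q11 n c)"
    using q ab by (intro mult_left_mono) auto
  ultimately have "(\<Sum>j=1..n. (lv n a (\<lambda>k. real_of_int (c k)) j)^2) \<ge>
      2*(1 - a*b) * (\<Sum>k=1..n. (real_of_int (c k))^2) + 2 * (a * b)"
    unfolding dec by (simp add: algebra_simps)
  then show ?thesis by (simp add: a_def b_def algebra_simps)
qed

lemma N_ge1:
  fixes c :: "nat \<Rightarrow> int"
  assumes "k \<in> {1..n}" "c k \<noteq> (0::int)"
  shows "1 \<le> (\<Sum>k=1..n. (c k)^2)"
proof -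
  have "1 \<le> (c k)^2" using assms sq_ge1 by auto
  also have "\<dots> \<le> (\<Sum>k=1..n. (c k)^2)" by (rule member_le_sum) (use assms in auto)
  finally show ?thesis .
qed

lemma N_eq1:
  fixes c :: "nat \<Rightarrow> int"
  assumes "k \<in> {1..n}" "c k \<noteq> (0::int)" "(\<Sum>k=1..n. (c k)^2) = 1"
  shows "(c k = 1 \<or> c k = -1) \<and> (\<forall>i\<in>{1..n}. i \<noteq> k \<longrightarrow> c i = 0)"
proof -
  have split: "(\<Sum>i=1..n. (c i)^2) = (c k)^2 + (\<Sum>i\<in>{1..n}-{k}. (c i)^2)"
    using assms(1) by (simp add: sum.remove)
  have ge: "1 \<le> (c k)^2" using assms sq_ge1 by auto
  have nn: "0 \<le> (\<Sum>i\<in>{1..n}-{k}. (c i)^2)" by (rule sum_nonneg) auto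
  have ck: "(c k)^2 = 1" using split ge nn assms(3) by linarith
  have rest: "(\<Sum>i\<in>{1..n}-{k}. (c i)^2) = 0" using split ck assms(3) by linarith
  then have "\<forall>i\<in>{1..n}-{k}. (c i)^2 = 0" by (subst (asm) sum_nonneg_eq_0_iff) auto
  then have "\<forall>i\<in>{1..n}. i \<noteq> k \<longrightarrow> c i = 0" by auto
  moreover have "c k = 1 \<or> c k = -1" using ck
    by (metis abs_of_nonneg abs_of_nonpos nle_le power2_eq_1_iff)
  ultimately show ?thesis by blast
qed


lemma lattice_iff: "x \<in> D_lattice n \<alpha> \<longleftrightarrow> (\<exists>c::nat\<Rightarrow>int. x = lv n \<alpha> (\<lambda>k. real_of_int (c k)))"
  unfolding D_lattice_def lattice_gen_def lv_def by auto

lemma lv_two: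
  assumes "k \<in> {1..n}" "l \<in> {1..n}"
  shows "lv n \<alpha> (\<lambda>i. (if i = k then u else 0) + (if i = l then v else 0)) = (\<lambda>j. u * Db \<alpha> k j + v * Db \<alpha> l j)"
  unfolding lv_def using assms
  by (simp add: distrib_right sum.distrib if_distrib[of "\<lambda>x. x * _"] sum.delta cong: if_cong)

lemma lv_one:
  assumes "k \<in> {1..n}"
  shows "lv n \<alpha> (\<lambda>i. if i = k then u else 0) = (\<lambda>j. u * Db \<alpha> k j)"
  unfolding lv_def using assms
  by (simp add: if_distrib[of "\<lambda>x. x * _"] sum.delta cong: if_cong)

lemma lv_nz:
  assumes n: "n \<ge> 3" and al: "1 < \<alpha>" "\<alpha> \<le> sqrt 2"
    and k: "k \<in> {1..n}" "c k \<noteq> (0::int)"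
  shows "2 \<le> (vnorm n (lv n \<alpha> (\<lambda>k. real_of_int (c k))))^2"
proof -
  have t: "\<alpha> * abar \<alpha> < 1" using ab_facts[OF al] by auto
  have N: "1 \<le> real_of_int (\<Sum>k=1..n. (c k)^2)" using N_ge1[of k n c] k by linarith
  have "0 \<le> 2 * (1 - \<alpha> * abar \<alpha>) * (real_of_int (\<Sum>k=1..n. (c k)^2) - 1)"
    using t N by simp
  then show ?thesis using key_bound[of n \<alpha> k c] n al k unfolding vnorm_sq by linarith
qed

lemma lv_nz2:
  assumes n: "n \<ge> 3" and al: "1 < \<alpha>" "\<alpha> \<le> sqrt 2"
    and k: "k \<in> {1..n}" "c k \<noteq> (0::int)"
  shows "lv n \<alpha> (\<lambda>k. real_of_int (c k)) \<noteq> (\<lambda>_. 0)"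
proof
  assume "lv n \<alpha> (\<lambda>k. real_of_int (c k)) = (\<lambda>_. 0)"
  then have "vnorm n (lv n \<alpha> (\<lambda>k. real_of_int (c k))) = 0" by (simp add: vnorm_def)
  then show False using lv_nz[of n \<alpha> k c] assms by simp
qed

lemma vnorm_two:
  assumes "p \<noteq> q" "p \<in> {1..n}" "q \<in> {1..n}"
  shows "vnorm n (\<lambda>j. u * stdb p j + v * stdb q j) = sqrt (u^2 + v^2)"
proof -
  have "(\<Sum>j=1..n. (u * stdb p j + v * stdb q j)^2) = (\<Sum>j=1..n. (if j = p then u^2 else 0) + (if j = q then v^2 else 0))"
    by (rule sum.cong) (use assms in \<open>auto simp: stdb_def\<close>)
  also have "\<dots> = u^2 + v^2" using assms by (simp add: sum.distrib)
  finally show ?thesis by (simp add: vnorm_def)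
qed

lemma Db_two:
  assumes n: "n \<ge> 3" and k: "k \<in> {1..n}" and ab: "\<alpha>^2 + (abar \<alpha>)^2 = 2"
  shows "\<exists>u v p q. p \<noteq> q \<and> p \<in> {1..n} \<and> q \<in> {1..n} \<and> u^2 + v^2 = 2 \<and> Db \<alpha> k = (\<lambda>j. u * stdb p j + v * stdb q j)"
proof (cases k rule: k_cases)
  case 1 then show ?thesis using k by simp
next
  case 2 then show ?thesis using n ab
    by (intro exI[of _ \<alpha>] exI[of _ "abar \<alpha>"] exI[of _ 1] exI[of _ 2]) (auto simp: Db1 fun_eq_iff)
next
  case 3 then show ?thesis using n ab
    by (intro exI[of _ \<alpha>] exI[of _ "abar \<alpha>"] exI[of _ 2] exI[of _ 3]) (auto simp: Db2 fun_eq_iff)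
next
  case 4 then show ?thesis using n ab
    by (intro exI[of _ "abar \<alpha>"] exI[of _ \<alpha>] exI[of _ 1] exI[of _ 3]) (auto simp: Db3 fun_eq_iff)
next
  case 5 then show ?thesis using n ab k
    by (intro exI[of _ "abar \<alpha>"] exI[of _ "-\<alpha>"] exI[of _ 3] exI[of _ 4]) (auto simp: Db4 fun_eq_iff)
next
  case 6 then show ?thesis using n ab k
    by (intro exI[of _ "abar \<alpha>"] exI[of _ "-\<alpha>"] exI[of _ "k-1"] exI[of _ k]) (auto simp: Db5 fun_eq_iff)
qed

lemma vnorm_Db:
  assumes n: "n \<ge> 3" and k: "k \<in> {1..n}" and ab: "\<alpha>^2 + (abar \<alpha>)^2 = 2"
  shows "vnorm n (Db \<alpha> k) = sqrt 2" "vnorm n (\<lambda>j. - Db \<alpha> k j) = sqrt 2"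
proof -
  obtain u v p q where h: "p \<noteq> q" "p \<in> {1..n}" "q \<in> {1..n}" "u^2 + v^2 = 2"
     "Db \<alpha> k = (\<lambda>j. u * stdb p j + v * stdb q j)" using Db_two[OF assms] by blast
  show "vnorm n (Db \<alpha> k) = sqrt 2" using vnorm_two[OF h(1-3)] h by simp
  have "(\<lambda>j. - Db \<alpha> k j) = (\<lambda>j. (-u) * stdb p j + (-v) * stdb q j)" using h(5) by auto
  then show "vnorm n (\<lambda>j. - Db \<alpha> k j) = sqrt 2" using vnorm_two[OF h(1-3), of "-u" "-v"] h by simp
qed


lemma lv_cong: "(\<And>k. k \<in> {1..n} \<Longrightarrow> r k = r' k) \<Longrightarrow> lv n \<alpha> r = lv n \<alpha> r'"
  unfolding lv_def by (intro ext sum.cong) auto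

lemma lv_zero: "(\<And>k. k \<in> {1..n} \<Longrightarrow> r k = 0) \<Longrightarrow> lv n \<alpha> r = (\<lambda>_. 0)"
  unfolding lv_def by (intro ext sum.neutral) auto

lemma nz_coeff:
  assumes "lv n \<alpha> (\<lambda>k. real_of_int (c k)) \<noteq> (\<lambda>_. 0)"
  obtains k where "k \<in> {1..n}" "c k \<noteq> 0"
  using assms lv_zero[of n "\<lambda>k. real_of_int (c k)" \<alpha>] by auto

lemma sqrt_le_of_sq: "2 \<le> y^2 \<Longrightarrow> 0 \<le> y \<Longrightarrow> sqrt 2 \<le> (y::real)"
  by (metis real_sqrt_abs real_sqrt_le_mono abs_of_nonneg)

lemma vnorm_nonneg: "0 \<le> vnorm n x" unfolding vnorm_def by (simp add: sum_nonneg)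

lemma lat_ge:
  assumes n: "n \<ge> 3" and al: "1 < \<alpha>" "\<alpha> \<le> sqrt 2"
    and x: "x \<in> D_lattice n \<alpha>" "x \<noteq> (\<lambda>_. 0)"
  shows "sqrt 2 \<le> vnorm n x"
proof -
  obtain c where c: "x = lv n \<alpha> (\<lambda>k. real_of_int (c k))" using x lattice_iff by blast
  obtain k where k: "k \<in> {1..n}" "c k \<noteq> 0" using nz_coeff x c by metis
  show ?thesis using lv_nz[of n \<alpha> k c] n al k c sqrt_le_of_sq vnorm_nonneg by metis
qed

lemma pos_le0: "(p::real) * y \<le> 0 \<Longrightarrow> p > 0 \<Longrightarrow> y \<le> 0"
  by (simp add: mult_le_0_iff)

lemma lat_eq:
  assumes n: "n \<ge> 3" and al: "1 < \<alpha>" "\<alpha> \<le> sqrt 2"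
    and x: "x \<in> D_lattice n \<alpha>" "x \<noteq> (\<lambda>_. 0)" and v: "vnorm n x = sqrt 2"
  shows "\<exists>k\<in>{1..n}. x = Db \<alpha> k \<or> x = (\<lambda>j. - Db \<alpha> k j)"
proof -
  obtain c where c: "x = lv n \<alpha> (\<lambda>k. real_of_int (c k))" using x lattice_iff by blast
  obtain k where k: "k \<in> {1..n}" "c k \<noteq> 0" using nz_coeff x c by metis
  have t: "\<alpha> * abar \<alpha> < 1" using ab_facts[OF al] by auto
  have sq: "(\<Sum>j=1..n. (lv n \<alpha> (\<lambda>k. real_of_int (c k)) j)^2) = 2"
    using v vnorm_sq[of n x] c by simp
  have kb: "(\<Sum>j=1..n. (lv n \<alpha> (\<lambda>k. real_of_int (c k)) j)^2)
          \<ge> 2 + 2 * (1 - \<alpha> * abar \<alpha>) * (real_of_int (\<Sum>k=1..n. (c k)^2) - 1)"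
    using key_bound[of n \<alpha> k c] n al k by blast
  have "2 * (1 - \<alpha> * abar \<alpha>) * (real_of_int (\<Sum>k=1..n. (c k)^2) - 1) \<le> 0"
    using sq kb by linarith
  moreover have "2 * (1 - \<alpha> * abar \<alpha>) > 0" using t by simp
  ultimately have "real_of_int (\<Sum>k=1..n. (c k)^2) - 1 \<le> 0" using pos_le0 by blast
  moreover have "1 \<le> (\<Sum>k=1..n. (c k)^2)" using N_ge1[of k n c] k by simp
  ultimately have N: "(\<Sum>k=1..n. (c k)^2) = 1" by linarith
  have h: "(c k = 1 \<or> c k = -1) \<and> (\<forall>i\<in>{1..n}. i \<noteq> k \<longrightarrow> c i = 0)"
    using N_eq1[of k n c] k N by blast
  have "x = lv n \<alpha> (\<lambda>i. if i = k then real_of_int (c k) else 0)"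
    unfolding c by (rule lv_cong) (use h in auto)
  also have "\<dots> = (\<lambda>j. real_of_int (c k) * Db \<alpha> k j)" by (rule lv_one[OF k(1)])
  finally have xe: "x = (\<lambda>j. real_of_int (c k) * Db \<alpha> k j)" .
  from h have "c k = 1 \<or> c k = -1" by blast
  then have "x = Db \<alpha> k \<or> x = (\<lambda>j. - Db \<alpha> k j)"
  proof
    assume "c k = 1" then show ?thesis using xe by simp
  next
    assume "c k = -1" then show ?thesis using xe by simp
  qed
  then show ?thesis using k(1) by (rule bexI)
qed


lemma Db_in:
  assumes "k \<in> {1..n}"
  shows "Db \<alpha> k \<in> D_lattice n \<alpha>" "(\<lambda>j. - Db \<alpha> k j) \<in> D_lattice n \<alpha>"
proof -
  have "Db \<alpha> k = lv n \<alpha> (\<lambda>i. real_of_int (if i = k then 1 else 0))"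
    using lv_one[OF assms, of \<alpha> 1] by (simp add: if_distrib[of real_of_int] cong: if_cong)
  then show "Db \<alpha> k \<in> D_lattice n \<alpha>" unfolding lattice_iff
    by (intro exI[of _ "\<lambda>i. if i = k then 1 else 0"])
  have "(\<lambda>j. - Db \<alpha> k j) = lv n \<alpha> (\<lambda>i. real_of_int (if i = k then -1 else 0))"
    using lv_one[OF assms, of \<alpha> "-1"] by (simp add: if_distrib[of real_of_int] cong: if_cong)
  then show "(\<lambda>j. - Db \<alpha> k j) \<in> D_lattice n \<alpha>" unfolding lattice_iff
    by (intro exI[of _ "\<lambda>i. if i = k then -1 else 0"])
qed

lemma sqrt2_nz: "vnorm n x = sqrt 2 \<Longrightarrow> x \<noteq> (\<lambda>_. 0)"
  by (auto simp: vnorm_def)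

lemma Db_nz:
  assumes n: "n \<ge> 3" and k: "k \<in> {1..n}" and ab: "\<alpha>^2 + (abar \<alpha>)^2 = 2"
  shows "Db \<alpha> k \<noteq> (\<lambda>_. 0)" "(\<lambda>j. - Db \<alpha> k j) \<noteq> (\<lambda>_. 0)"
  using vnorm_Db[OF assms] sqrt2_nz by auto


lemma lambda1_eq:
  assumes n: "n \<ge> 3" and al: "1 < \<alpha>" "\<alpha> \<le> sqrt 2"
  shows "lambda1 n (D_lattice n \<alpha>) = sqrt 2"
  unfolding lambda1_def
proof (rule cInf_eq_minimum)
  have ab: "\<alpha>^2 + (abar \<alpha>)^2 = 2" using ab_facts[OF al] by auto
  have k: "1 \<in> {1..n}" using n by auto
  show "sqrt 2 \<in> {vnorm n x |x. x \<in> D_lattice n \<alpha> \<and> x \<noteq> (\<lambda>_. 0)}"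
    apply (rule CollectI, rule exI[of _ "Db \<alpha> 1"])
    using Db_in(1)[OF k, of \<alpha>] Db_nz(1)[OF n k ab] vnorm_Db(1)[OF n k ab] by simp
next
  fix y assume "y \<in> {vnorm n x |x. x \<in> D_lattice n \<alpha> \<and> x \<noteq> (\<lambda>_. 0)}"
  then obtain x where "y = vnorm n x" "x \<in> D_lattice n \<alpha>" "x \<noteq> (\<lambda>_. 0)" by blast
  then show "sqrt 2 \<le> y" using lat_ge[OF n al] by simp
qed

lemma minvecs_eq:
  assumes n: "n \<ge> 3" and al: "1 < \<alpha>" "\<alpha> \<le> sqrt 2"
  shows "minvecs n (D_lattice n \<alpha>) = {Db \<alpha> k | k. k \<in> {1..n}} \<union> {(\<lambda>j. - Db \<alpha> k j) | k. k \<in> {1..n}}"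
proof -
  have ab: "\<alpha>^2 + (abar \<alpha>)^2 = 2" using ab_facts[OF al] by auto
  show ?thesis
  proof
    show "minvecs n (D_lattice n \<alpha>) \<subseteq> {Db \<alpha> k | k. k \<in> {1..n}} \<union> {(\<lambda>j. - Db \<alpha> k j) | k. k \<in> {1..n}}"
    proof
      fix x assume "x \<in> minvecs n (D_lattice n \<alpha>)"
      then have x: "x \<in> D_lattice n \<alpha>" "x \<noteq> (\<lambda>_. 0)" "vnorm n x = sqrt 2"
        unfolding minvecs_def lambda1_eq[OF assms] by auto
      obtain k where "k \<in> {1..n}" "x = Db \<alpha> k \<or> x = (\<lambda>j. - Db \<alpha> k j)"
        using lat_eq[OF n al x] by blast
      then show "x \<in> {Db \<alpha> k | k. k \<in> {1..n}} \<union> {(\<lambda>j. - Db \<alpha> k j) | k. k \<in> {1..n}}"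
        by blast
    qed
    show "{Db \<alpha> k | k. k \<in> {1..n}} \<union> {(\<lambda>j. - Db \<alpha> k j) | k. k \<in> {1..n}} \<subseteq> minvecs n (D_lattice n \<alpha>)"
    proof
      fix x assume "x \<in> {Db \<alpha> k | k. k \<in> {1..n}} \<union> {(\<lambda>j. - Db \<alpha> k j) | k. k \<in> {1..n}}"
      then obtain k where k: "k \<in> {1..n}" "x = Db \<alpha> k \<or> x = (\<lambda>j. - Db \<alpha> k j)" by blast
      then show "x \<in> minvecs n (D_lattice n \<alpha>)"
        unfolding minvecs_def lambda1_eq[OF assms]
        using Db_in[OF k(1), of \<alpha>] Db_nz[OF n k(1) ab] vnorm_Db[OF n k(1) ab] by auto
    qed
  qed
qed


lemma comb_nz:
  assumes n: "n \<ge> 3" and al: "1 < \<alpha>" "\<alpha> \<le> sqrt 2"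
    and kl: "k \<in> {1..n}" "l \<in> {1..n}" "k \<noteq> l"
  shows "(\<lambda>j. Db \<alpha> k j + real_of_int s * Db \<alpha> l j) \<noteq> (\<lambda>_. 0)"
proof -
  define c where "c = (\<lambda>i. (if i = k then 1 else 0) + (if i = l then s else (0::int)))"
  have "lv n \<alpha> (\<lambda>i. real_of_int (c i)) = lv n \<alpha> (\<lambda>i. (if i = k then 1 else 0) + (if i = l then real_of_int s else 0))"
    unfolding c_def by (rule lv_cong) simp
  also have "\<dots> = (\<lambda>j. 1 * Db \<alpha> k j + real_of_int s * Db \<alpha> l j)" by (rule lv_two[OF kl(1,2)])
  finally have e: "lv n \<alpha> (\<lambda>i. real_of_int (c i)) = (\<lambda>j. Db \<alpha> k j + real_of_int s * Db \<alpha> l j)" by simp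
  have "c k \<noteq> 0" using kl(3) by (simp add: c_def)
  then show ?thesis using lv_nz2[of n \<alpha> k c] n al kl(1) e by simp
qed

lemma card_minvecs:
  assumes n: "n \<ge> 3" and al: "1 < \<alpha>" "\<alpha> \<le> sqrt 2"
  shows "card ({Db \<alpha> k | k. k \<in> {1..n}} \<union> {(\<lambda>j. - Db \<alpha> k j) | k. k \<in> {1..n}}) = 2 * n"
proof -
  have ab: "\<alpha>^2 + (abar \<alpha>)^2 = 2" using ab_facts[OF al] by auto
  have A: "{Db \<alpha> k | k. k \<in> {1..n}} = Db \<alpha> ` {1..n}" by (rule Setcompr_eq_image)
  have B: "{(\<lambda>j. - Db \<alpha> k j) | k. k \<in> {1..n}} = (\<lambda>k j. - Db \<alpha> k j) ` {1..n}"
    using Setcompr_eq_image[of "\<lambda>k j. - Db \<alpha> k j" "{1..n}"] by simp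
  have injA: "inj_on (Db \<alpha>) {1..n}"
  proof (rule inj_onI)
    fix k l assume kl: "k \<in> {1..n}" "l \<in> {1..n}" "Db \<alpha> k = Db \<alpha> l"
    show "k = l"
    proof (rule ccontr)
      assume "k \<noteq> l"
      then have "(\<lambda>j. Db \<alpha> k j + real_of_int (-1) * Db \<alpha> l j) \<noteq> (\<lambda>_. 0)"
        using comb_nz[OF n al kl(1,2)] by blast
      then show False using kl(3) by simp
    qed
  qed
  have injB: "inj_on (\<lambda>k j. - Db \<alpha> k j) {1..n}"
  proof (rule inj_onI)
    fix k l assume kl: "k \<in> {1..n}" "l \<in> {1..n}" "(\<lambda>j. - Db \<alpha> k j) = (\<lambda>j. - Db \<alpha> l j)"
    then have "Db \<alpha> k = Db \<alpha> l" by (simp add: fun_eq_iff)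
    then show "k = l" by (rule inj_onD[OF injA _ kl(1,2)])
  qed
  have disj: "Db \<alpha> ` {1..n} \<inter> (\<lambda>k j. - Db \<alpha> k j) ` {1..n} = {}"
  proof (rule ccontr)
    assume "Db \<alpha> ` {1..n} \<inter> (\<lambda>k j. - Db \<alpha> k j) ` {1..n} \<noteq> {}"
    then obtain f where f: "f \<in> Db \<alpha> ` {1..n}" "f \<in> (\<lambda>k j. - Db \<alpha> k j) ` {1..n}" by auto
    from f(1) obtain k where k: "k \<in> {1..n}" "f = Db \<alpha> k" by (rule imageE) simp
    from f(2) obtain l where l: "l \<in> {1..n}" "f = (\<lambda>j. - Db \<alpha> l j)" by (rule imageE) simp
    have kl: "k \<in> {1..n}" "l \<in> {1..n}" "Db \<alpha> k = (\<lambda>j. - Db \<alpha> l j)" using k l by auto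
    show False
    proof (cases "k = l")
      case True
      then have "Db \<alpha> k = (\<lambda>_. 0)" using kl(3) by (simp add: fun_eq_iff)
      then show False using Db_nz(1)[OF n kl(1) ab] by simp
    next
      case False
      then have "(\<lambda>j. Db \<alpha> k j + real_of_int 1 * Db \<alpha> l j) \<noteq> (\<lambda>_. 0)"
        using comb_nz[OF n al kl(1,2)] by blast
      then show False using kl(3) by simp
    qed
  qed
  have "card (Db \<alpha> ` {1..n} \<union> (\<lambda>k j. - Db \<alpha> k j) ` {1..n})
      = card (Db \<alpha> ` {1..n}) + card ((\<lambda>k j. - Db \<alpha> k j) ` {1..n})"
    by (rule card_Un_disjoint) (use disj in auto)
  also have "\<dots> = n + n" using card_image[OF injA] card_image[OF injB] by simp
  finally show ?thesis unfolding A B by simp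
qed


definition insp :: "(nat \<Rightarrow> real) set \<Rightarrow> (nat \<Rightarrow> real) \<Rightarrow> bool" where
  "insp A y \<longleftrightarrow> (\<exists>C. y = (\<lambda>i. \<Sum>v\<in>A. C v * v i))"

lemma insp_mem: "finite A \<Longrightarrow> w \<in> A \<Longrightarrow> insp A w"
  unfolding insp_def
  by (rule exI[of _ "\<lambda>v. if v = w then 1 else 0"])
     (simp add: if_distrib[of "\<lambda>x. x * _"] sum.delta cong: if_cong)

lemma insp_add: "insp A y \<Longrightarrow> insp A z \<Longrightarrow> insp A (\<lambda>i. y i + z i)"
  unfolding insp_def
proof (elim exE)
  fix C D assume "y = (\<lambda>i. \<Sum>v\<in>A. C v * v i)" "z = (\<lambda>i. \<Sum>v\<in>A. D v * v i)"
  then show "\<exists>E. (\<lambda>i. y i + z i) = (\<lambda>i. \<Sum>v\<in>A. E v * v i)"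
    by (intro exI[of _ "\<lambda>v. C v + D v"]) (simp add: distrib_right sum.distrib)
qed

lemma insp_scale: "insp A y \<Longrightarrow> insp A (\<lambda>i. u * y i)"
  unfolding insp_def
proof (elim exE)
  fix C assume "y = (\<lambda>i. \<Sum>v\<in>A. C v * v i)"
  then show "\<exists>E. (\<lambda>i. u * y i) = (\<lambda>i. \<Sum>v\<in>A. E v * v i)"
    by (intro exI[of _ "\<lambda>v. u * C v"]) (simp add: sum_distrib_left mult.assoc)
qed

lemma insp_zero: "insp A (\<lambda>_. 0)"
  unfolding insp_def by (rule exI[of _ "\<lambda>_. 0"]) simp

lemma insp_sum: "finite I \<Longrightarrow> (\<And>j. j \<in> I \<Longrightarrow> insp A (f j)) \<Longrightarrow> insp A (\<lambda>i. \<Sum>j\<in>I. f j i)"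
proof (induction I rule: finite_induct)
  case empty then show ?case by (simp add: insp_zero)
next
  case (insert x F)
  then have "insp A (\<lambda>i. f x i + (\<Sum>j\<in>F. f j i))" by (intro insp_add) auto
  then show ?case using insert by simp
qed


lemma e1_gen:
  fixes a b :: real
  assumes D: "D \<noteq> 0" "D = a^3 + b^3"
  shows "stdb 1 i = (a^2/D) * (a * stdb 1 i + b * stdb 2 i) + (-a*b/D) * (a * stdb 2 i + b * stdb 3 i) + (b^2/D) * (b * stdb 1 i + a * stdb 3 i)"
        "stdb 2 i = (a^2/D) * (a * stdb 2 i + b * stdb 3 i) + (-a*b/D) * (b * stdb 1 i + a * stdb 3 i) + (b^2/D) * (a * stdb 1 i + b * stdb 2 i)"
        "stdb 3 i = (a^2/D) * (b * stdb 1 i + a * stdb 3 i) + (-a*b/D) * (a * stdb 1 i + b * stdb 2 i) + (b^2/D) * (a * stdb 2 i + b * stdb 3 i)"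
  using D(1) by (auto simp: stdb_def field_simps) (simp_all add: D(2) power2_eq_square power3_eq_cube algebra_simps)


lemma Db_ge4: "m \<ge> 4 \<Longrightarrow> Db \<alpha> m i = abar \<alpha> * stdb (m-1) i - \<alpha> * stdb m i"
  by (cases "m = 4") (simp_all add: Db4 Db5)

lemma stdb_step: "m \<ge> 4 \<Longrightarrow> \<alpha> \<noteq> 0 \<Longrightarrow> stdb m i = (abar \<alpha> / \<alpha>) * stdb (m-1) i + (-1/\<alpha>) * Db \<alpha> m i"
  by (simp add: Db_ge4 field_simps)

lemma span_stdb:
  assumes n: "n \<ge> 3" and al: "1 < \<alpha>" "\<alpha> \<le> sqrt 2" and m: "m \<in> {1..n}"
  shows "insp (Db \<alpha> ` {1..n}) (stdb m)"
proof -
  define A where "A = Db \<alpha> ` {1..n}"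
  have fA: "finite A" by (simp add: A_def)
  have mem: "insp A (Db \<alpha> k)" if "k \<in> {1..n}" for k using insp_mem[OF fA] that by (simp add: A_def)
  define a where "a = \<alpha>"
  define b where "b = abar \<alpha>"
  have b0: "b \<ge> 0" using ab_facts[OF al] by (simp add: b_def)
  define D where "D = a^3 + b^3"
  have "a^3 > 0" using al by (simp add: a_def)
  moreover have "b^3 \<ge> 0" using b0 by simp
  ultimately have D0: "D \<noteq> 0" unfolding D_def by linarith
  have i1: "1 \<in> {1..n}" "2 \<in> {1..n}" "3 \<in> {1..n}" using n by auto
  have comb: "insp A (\<lambda>i. u * Db \<alpha> 1 i + v * Db \<alpha> 2 i + w * Db \<alpha> 3 i)" for u v w
    by (intro insp_add insp_scale mem i1)
  have s123: "insp A (stdb 1)" "insp A (stdb 2)" "insp A (stdb 3)"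
  proof -
    have "stdb 1 = (\<lambda>i. (a^2/D) * Db \<alpha> 1 i + (-a*b/D) * Db \<alpha> 2 i + (b^2/D) * Db \<alpha> 3 i)"
      using e1_gen(1)[OF D0 D_def] by (simp add: fun_eq_iff Db1 Db2 Db3 a_def b_def)
    then show "insp A (stdb 1)" by (simp only: comb)
    have "stdb 2 = (\<lambda>i. (b^2/D) * Db \<alpha> 1 i + (a^2/D) * Db \<alpha> 2 i + (-a*b/D) * Db \<alpha> 3 i)"
      using e1_gen(2)[OF D0 D_def] by (simp add: fun_eq_iff Db1 Db2 Db3 a_def b_def algebra_simps)
    then show "insp A (stdb 2)" by (simp only: comb)
    have "stdb 3 = (\<lambda>i. (-a*b/D) * Db \<alpha> 1 i + (b^2/D) * Db \<alpha> 2 i + (a^2/D) * Db \<alpha> 3 i)"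
      using e1_gen(3)[OF D0 D_def] by (simp add: fun_eq_iff Db1 Db2 Db3 a_def b_def algebra_simps)
    then show "insp A (stdb 3)" by (simp only: comb)
  qed
  have ge3: "m \<le> n \<longrightarrow> insp A (stdb m)" if "m \<ge> 3" for m
    using that
  proof (induction m rule: nat_induct_at_least)
    case base then show ?case using s123 by simp
  next
    case (Suc k)
    show ?case
    proof
      assume kn: "Suc k \<le> n"
      have "insp A (stdb k)" using Suc kn by simp
      moreover have "insp A (Db \<alpha> (Suc k))" using kn Suc.hyps by (intro mem) auto
      ultimately have "insp A (\<lambda>i. (abar \<alpha> / \<alpha>) * stdb (Suc k - 1) i + (-1/\<alpha>) * Db \<alpha> (Suc k) i)"
        by (intro insp_add insp_scale) auto
      moreover have "stdb (Suc k) = (\<lambda>i. (abar \<alpha> / \<alpha>) * stdb (Suc k - 1) i + (-1/\<alpha>) * Db \<alpha> (Suc k) i)"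
        using stdb_step[of "Suc k" \<alpha>] Suc.hyps al by (auto simp: fun_eq_iff)
      ultimately show "insp A (stdb (Suc k))" by simp
    qed
  qed
  show ?thesis
  proof (cases "m \<ge> 3")
    case True then show ?thesis using ge3 m by (simp add: A_def)
  next
    case False then have "m = 1 \<or> m = 2" using m by auto
    then show ?thesis using s123 by (auto simp: A_def)
  qed
qed


lemma x_expand: "in_Rn n x \<Longrightarrow> x = (\<lambda>i. \<Sum>j\<in>{1..n}. x j * stdb j i)"
proof (rule ext)
  fix i assume h: "in_Rn n x"
  have "(\<Sum>j\<in>{1..n}. x j * stdb j i) = (\<Sum>j\<in>{1..n}. if i = j then x j else 0)"
    by (rule sum.cong) (auto simp: stdb_def)
  also have "\<dots> = (if i \<in> {1..n} then x i else 0)" by (simp add: sum.delta)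
  also have "\<dots> = x i" using h by (auto simp: in_Rn_def)
  finally show "x i = (\<Sum>j\<in>{1..n}. x j * stdb j i)" by simp
qed

lemma spans_main:
  assumes n: "n \<ge> 3" and al: "1 < \<alpha>" "\<alpha> \<le> sqrt 2"
  shows "spans_Rn n (minvecs n (D_lattice n \<alpha>))"
  unfolding spans_Rn_def
proof (intro allI impI)
  fix x assume x: "in_Rn n x"
  define A where "A = Db \<alpha> ` {1..n}"
  have "insp A (\<lambda>i. \<Sum>j\<in>{1..n}. x j * stdb j i)"
    by (rule insp_sum) (auto intro!: insp_scale span_stdb[OF n al, unfolded A_def[symmetric]])
  then obtain C where C: "(\<lambda>i. \<Sum>j\<in>{1..n}. x j * stdb j i) = (\<lambda>i. \<Sum>v\<in>A. C v * v i)"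
    unfolding insp_def by blast
  have sub: "A \<subseteq> minvecs n (D_lattice n \<alpha>)"
    unfolding minvecs_eq[OF n al] A_def by blast
  show "\<exists>F c. finite F \<and> F \<subseteq> minvecs n (D_lattice n \<alpha>) \<and> x = (\<lambda>j. \<Sum>v\<in>F. c v * v j)"
    apply (rule exI[of _ A], rule exI[of _ C])
    using sub x_expand[OF x] C by (simp add: A_def)
qed

theorem mainTheorem15:
  fixes n :: nat and \<alpha> :: real
  assumes "n \<ge> 3" and "1 < \<alpha>" and "\<alpha> \<le> sqrt 2"
  shows "minvecs n (D_lattice n \<alpha>) = {Db \<alpha> k | k. k \<in> {1..n}} \<union> {(\<lambda>j. - Db \<alpha> k j) | k. k \<in> {1..n}}
         \<and> (lambda1 n (D_lattice n \<alpha>))^2 = 2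
         \<and> generic_WR n (D_lattice n \<alpha>)"
  using minvecs_eq[OF assms] lambda1_eq[OF assms] spans_main[OF assms] card_minvecs[OF assms]
  by (simp add: generic_WR_def)


end
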